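(* Let $ABC$ be a triangle with incenter $I$ and Bevan point $B_e$. Let $A', B', C'$ be the feet of the perpendiculars from $B_e$ to $AI, BI, CI$ respectively. Then the orthocenter of triangle $A'B'C'$ coincides with the Nagel point of $ABC$.
   Context: The Bevan point $B_e$ of $ABC$ is the circumcenter of the excentral triangle $I_AI_BI_C$ (the triangle formed by the three excenters of $ABC$). The Nagel point of $ABC$ is the common point of the lines joining each vertex to the point where the corresponding excircle touches the opposite side. *)

theory Defs
  imports "HOL-Analysis.Analysis"
begin

type_synonym point = "real^2"

definition incenter :: "point \<Rightarrow> point \<Rightarrow> point \<Rightarrow> point" where
  "incenter A B C =
     (let a = dist B C; b = dist C A; c = dist A B
      in (1 / (a + b + c)) *\<^sub>R (a *\<^sub>R A + b *\<^sub>R B + c *\<^sub>R C))"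

text \<open>Excenter opposite to vertex A (centre of the excircle tangent to side BC).\<close>
definition excenter :: "point \<Rightarrow> point \<Rightarrow> point \<Rightarrow> point" where
  "excenter A B C =
     (let a = dist B C; b = dist C A; c = dist A B
      in (1 / (- a + b + c)) *\<^sub>R ((- a) *\<^sub>R A + b *\<^sub>R B + c *\<^sub>R C))"

definition circumcenter :: "point \<Rightarrow> point \<Rightarrow> point \<Rightarrow> point" where
  "circumcenter P Q R = (THE X. dist X P = dist X Q \<and> dist X Q = dist X R)"

definition bevan_point :: "point \<Rightarrow> point \<Rightarrow> point \<Rightarrow> point" where
  "bevan_point A B C = circumcenter (excenter A B C) (excenter B C A) (excenter C A B)"

definition foot :: "point \<Rightarrow> point \<Rightarrow> point \<Rightarrow> point" where
  "foot P U V = U + (((P - U) \<bullet> (V - U)) / ((V - U) \<bullet> (V - U))) *\<^sub>R (V - U)"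

text \<open>Nagel point: the common point of the lines joining each vertex to the point
  where the corresponding excircle touches the opposite side (the touch point being
  the foot of the perpendicular from the excenter onto that side).\<close>
definition nagel_point :: "point \<Rightarrow> point \<Rightarrow> point \<Rightarrow> point" where
  "nagel_point A B C =
     (THE N. collinear {A, foot (excenter A B C) B C, N}
           \<and> collinear {B, foot (excenter B C A) C A, N}
           \<and> collinear {C, foot (excenter C A B) A B, N})"

definition is_orthocenter :: "point \<Rightarrow> point \<Rightarrow> point \<Rightarrow> point \<Rightarrow> bool" where
  "is_orthocenter P Q R H \<longleftrightarrow>
     (H - P) \<bullet> (R - Q) = 0 \<and> (H - Q) \<bullet> (P - R) = 0 \<and> (H - R) \<bullet> (Q - P) = 0"

end

theory Submission
  imports Defs
begin
lemma perp_of_equid: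
  fixes Y E J1 J2 :: "'a::real_inner"
  assumes "dist Y J1 = dist Y J2" "dist E J1 = dist E J2"
  shows "inner (Y - E) (J2 - J1) = 0"
proof -
  have "inner (Y - J1) (Y - J1) = inner (Y - J2) (Y - J2)"
    using assms(1) by (simp add: dist_norm power2_norm_eq_inner[symmetric])
  moreover have "inner (E - J1) (E - J1) = inner (E - J2) (E - J2)"
    using assms(2) by (simp add: dist_norm power2_norm_eq_inner[symmetric])
  ultimately show ?thesis
    by (simp add: inner_diff_left inner_diff_right inner_commute algebra_simps)
qed



definition ipc :: "real\<Rightarrow>real\<Rightarrow>real\<Rightarrow>real\<Rightarrow>real\<Rightarrow>real\<Rightarrow>real\<Rightarrow>real" where
 "ipc x y z p1 q1 p2 q2 = p1*p2*(x+y)^2 + (p1*q2+p2*q1)*(x^2+x*y+x*z-y*z) + q1*q2*(z+x)^2"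

lemma inner2: "inner (w::real^2) q = (w$1)*(q$1) + (w$2)*(q$2)"
  by (simp add: inner_vec_def sum_2)

lemma collinear_shift: "collinear {a, b, a + k *\<^sub>R (b - a)}"
  unfolding collinear_alt
  by (rule exI[of _ a], rule exI[of _ "b - a"]) (auto intro: exI[of _ 0] exI[of _ 1] exI[of _ k])

lemma collinear_param:
  assumes "collinear {a, b, c}" "a \<noteq> b"
  shows "\<exists>k. c = a + k *\<^sub>R (b - a)"
  using assms collinear_3_affine_hull[of a b c] affine_hull_2_alt[of a b] by auto

lemma conc0:
  fixes x y z S iX iY aX aY bX bY cX cY :: real
  assumes p: "x>0" "y>0" "z>0" "S>0" and Sd: "S = x+y+z"
  and d: "iX = (z+x)/(2*S)" "iY = (x+y)/(2*S)"
  "aX = (z+x)/(2*x)" "aY = (x+y)/(2*x)"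
  "bX = -(z+x)/(2*y)" "bY = (x+y)/(2*y)"
  "cX = (z+x)/(2*z)" "cY = -(x+y)/(2*z)"
  shows "ipc x y z (bX-aX) (bY-aY) (cX-iX) (cY-iY) = 0"
  using p unfolding ipc_def d
  apply (simp add: field_simps)
  unfolding Sd by algebra

lemma conc1:
  fixes x y z S iX iY aX aY bX bY cX cY :: real
  assumes p: "x>0" "y>0" "z>0" "S>0" and Sd: "S = x+y+z"
  and d: "iX = (z+x)/(2*S)" "iY = (x+y)/(2*S)"
  "aX = (z+x)/(2*x)" "aY = (x+y)/(2*x)"
  "bX = -(z+x)/(2*y)" "bY = (x+y)/(2*y)"
  "cX = (z+x)/(2*z)" "cY = -(x+y)/(2*z)"
  shows "ipc x y z (cX-bX) (cY-bY) (aX-iX) (aY-iY) = 0"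
  using p unfolding ipc_def d
  apply (simp add: field_simps)
  unfolding Sd by algebra

lemma conc2:
  fixes x y z S iX iY aX aY bX bY cX cY :: real
  assumes p: "x>0" "y>0" "z>0" "S>0" and Sd: "S = x+y+z"
  and d: "iX = (z+x)/(2*S)" "iY = (x+y)/(2*S)"
  "aX = (z+x)/(2*x)" "aY = (x+y)/(2*x)"
  "bX = -(z+x)/(2*y)" "bY = (x+y)/(2*y)"
  "cX = (z+x)/(2*z)" "cY = -(x+y)/(2*z)"
  shows "ipc x y z (bX+cX) (bY+cY) iX iY = 0"
  using p unfolding ipc_def d
  apply (simp add: field_simps)
  unfolding Sd by algebra

lemma conc3:
  fixes x y z S iX iY aX aY bX bY cX cY :: real
  assumes p: "x>0" "y>0" "z>0" "S>0" and Sd: "S = x+y+z"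
  and d: "iX = (z+x)/(2*S)" "iY = (x+y)/(2*S)"
  "aX = (z+x)/(2*x)" "aY = (x+y)/(2*x)"
  "bX = -(z+x)/(2*y)" "bY = (x+y)/(2*y)"
  "cX = (z+x)/(2*z)" "cY = -(x+y)/(2*z)"
  shows "ipc x y z (cX+aX-2) (cY+aY) (iX-1) iY = 0"
  using p unfolding ipc_def d
  apply (simp add: field_simps)
  unfolding Sd by algebra

lemma conc4:
  fixes x y z S iX iY aX aY bX bY cX cY :: real
  assumes p: "x>0" "y>0" "z>0" "S>0" and Sd: "S = x+y+z"
  and d: "iX = (z+x)/(2*S)" "iY = (x+y)/(2*S)"
  "aX = (z+x)/(2*x)" "aY = (x+y)/(2*x)"
  "bX = -(z+x)/(2*y)" "bY = (x+y)/(2*y)"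
  "cX = (z+x)/(2*z)" "cY = -(x+y)/(2*z)"
  shows "ipc x y z (aX+bX) (aY+bY-2) iX (iY-1) = 0"
  using p unfolding ipc_def d
  apply (simp add: field_simps)
  unfolding Sd by algebra

lemma conc5:
  fixes x y z S iX iY aX aY bX bY cX cY :: real
  assumes p: "x>0" "y>0" "z>0" "S>0" and Sd: "S = x+y+z"
  and d: "iX = (z+x)/(2*S)" "iY = (x+y)/(2*S)"
  "aX = (z+x)/(2*x)" "aY = (x+y)/(2*x)"
  "bX = -(z+x)/(2*y)" "bY = (x+y)/(2*y)"
  "cX = (z+x)/(2*z)" "cY = -(x+y)/(2*z)"
  shows "aX - iX = (y+z)/x * iX"
  using p unfolding ipc_def d
  apply (simp add: field_simps)
  unfolding Sd by algebra

lemma conc6: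
  fixes x y z S iX iY aX aY bX bY cX cY :: real
  assumes p: "x>0" "y>0" "z>0" "S>0" and Sd: "S = x+y+z"
  and d: "iX = (z+x)/(2*S)" "iY = (x+y)/(2*S)"
  "aX = (z+x)/(2*x)" "aY = (x+y)/(2*x)"
  "bX = -(z+x)/(2*y)" "bY = (x+y)/(2*y)"
  "cX = (z+x)/(2*z)" "cY = -(x+y)/(2*z)"
  shows "aY - iY = (y+z)/x * iY"
  using p unfolding ipc_def d
  apply (simp add: field_simps)
  unfolding Sd by algebra

lemma conc7:
  fixes x y z S iX iY aX aY bX bY cX cY :: real
  assumes p: "x>0" "y>0" "z>0" "S>0" and Sd: "S = x+y+z"
  and d: "iX = (z+x)/(2*S)" "iY = (x+y)/(2*S)"
  "aX = (z+x)/(2*x)" "aY = (x+y)/(2*x)"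
  "bX = -(z+x)/(2*y)" "bY = (x+y)/(2*y)"
  "cX = (z+x)/(2*z)" "cY = -(x+y)/(2*z)"
  shows "bX - iX = (z+x)/y * (iX - 1)"
  using p unfolding ipc_def d
  apply (simp add: field_simps)
  unfolding Sd by algebra

lemma conc8:
  fixes x y z S iX iY aX aY bX bY cX cY :: real
  assumes p: "x>0" "y>0" "z>0" "S>0" and Sd: "S = x+y+z"
  and d: "iX = (z+x)/(2*S)" "iY = (x+y)/(2*S)"
  "aX = (z+x)/(2*x)" "aY = (x+y)/(2*x)"
  "bX = -(z+x)/(2*y)" "bY = (x+y)/(2*y)"
  "cX = (z+x)/(2*z)" "cY = -(x+y)/(2*z)"
  shows "bY - iY = (z+x)/y * iY"
  using p unfolding ipc_def d
  apply (simp add: field_simps)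
  unfolding Sd by algebra

lemma conc9:
  fixes x y z S iX iY aX aY bX bY cX cY :: real
  assumes p: "x>0" "y>0" "z>0" "S>0" and Sd: "S = x+y+z"
  and d: "iX = (z+x)/(2*S)" "iY = (x+y)/(2*S)"
  "aX = (z+x)/(2*x)" "aY = (x+y)/(2*x)"
  "bX = -(z+x)/(2*y)" "bY = (x+y)/(2*y)"
  "cX = (z+x)/(2*z)" "cY = -(x+y)/(2*z)"
  shows "cX - iX = (x+y)/z * iX"
  using p unfolding ipc_def d
  apply (simp add: field_simps)
  unfolding Sd by algebra

lemma conc10:
  fixes x y z S iX iY aX aY bX bY cX cY :: real
  assumes p: "x>0" "y>0" "z>0" "S>0" and Sd: "S = x+y+z"
  and d: "iX = (z+x)/(2*S)" "iY = (x+y)/(2*S)"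
  "aX = (z+x)/(2*x)" "aY = (x+y)/(2*x)"
  "bX = -(z+x)/(2*y)" "bY = (x+y)/(2*y)"
  "cX = (z+x)/(2*z)" "cY = -(x+y)/(2*z)"
  shows "cY - iY = (x+y)/z * (iY - 1)"
  using p unfolding ipc_def d
  apply (simp add: field_simps)
  unfolding Sd by algebra

lemma conc11:
  fixes x y z S iX iY aX aY bX bY cX cY :: real
  assumes p: "x>0" "y>0" "z>0" "S>0" and Sd: "S = x+y+z"
  and d: "iX = (z+x)/(2*S)" "iY = (x+y)/(2*S)"
  "aX = (z+x)/(2*x)" "aY = (x+y)/(2*x)"
  "bX = -(z+x)/(2*y)" "bY = (x+y)/(2*y)"
  "cX = (z+x)/(2*z)" "cY = -(x+y)/(2*z)"
  shows "ipc x y z (y/S - (aX-iX)/2) (z/S - (aY-iY)/2) ((cX-iX)/2 - (1 + (bX-iX)/2)) (1 + (cY-iY)/2 - (bY-iY)/2) = 0"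
  using p unfolding ipc_def d
  apply (simp add: field_simps)
  unfolding Sd by algebra

lemma conc12:
  fixes x y z S iX iY aX aY bX bY cX cY :: real
  assumes p: "x>0" "y>0" "z>0" "S>0" and Sd: "S = x+y+z"
  and d: "iX = (z+x)/(2*S)" "iY = (x+y)/(2*S)"
  "aX = (z+x)/(2*x)" "aY = (x+y)/(2*x)"
  "bX = -(z+x)/(2*y)" "bY = (x+y)/(2*y)"
  "cX = (z+x)/(2*z)" "cY = -(x+y)/(2*z)"
  shows "ipc x y z (y/S - (1 + (bX-iX)/2)) (z/S - (bY-iY)/2) ((aX-iX)/2 - (cX-iX)/2) ((aY-iY)/2 - (1 + (cY-iY)/2)) = 0"
  using p unfolding ipc_def d
  apply (simp add: field_simps)
  unfolding Sd by algebra

lemma conc13: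
  fixes x y z S iX iY aX aY bX bY cX cY :: real
  assumes p: "x>0" "y>0" "z>0" "S>0" and Sd: "S = x+y+z"
  and d: "iX = (z+x)/(2*S)" "iY = (x+y)/(2*S)"
  "aX = (z+x)/(2*x)" "aY = (x+y)/(2*x)"
  "bX = -(z+x)/(2*y)" "bY = (x+y)/(2*y)"
  "cX = (z+x)/(2*z)" "cY = -(x+y)/(2*z)"
  shows "ipc x y z (y/S - (cX-iX)/2) (z/S - (1 + (cY-iY)/2)) (1 + (bX-iX)/2 - (aX-iX)/2) ((bY-iY)/2 - (aY-iY)/2) = 0"
  using p unfolding ipc_def d
  apply (simp add: field_simps)
  unfolding Sd by algebra

lemma conc14:
  fixes x y z S iX iY aX aY bX bY cX cY :: real
  assumes p: "x>0" "y>0" "z>0" "S>0" and Sd: "S = x+y+z"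
  and d: "iX = (z+x)/(2*S)" "iY = (x+y)/(2*S)"
  "aX = (z+x)/(2*x)" "aY = (x+y)/(2*x)"
  "bX = -(z+x)/(2*y)" "bY = (x+y)/(2*y)"
  "cX = (z+x)/(2*z)" "cY = -(x+y)/(2*z)"
  shows "ipc x y z (aX - 1) aY (-1) 1 = z*(y+z)"
  using p unfolding ipc_def d
  apply (simp add: field_simps)
  unfolding Sd by algebra

lemma conc15:
  fixes x y z S iX iY aX aY bX bY cX cY :: real
  assumes p: "x>0" "y>0" "z>0" "S>0" and Sd: "S = x+y+z"
  and d: "iX = (z+x)/(2*S)" "iY = (x+y)/(2*S)"
  "aX = (z+x)/(2*x)" "aY = (x+y)/(2*x)"
  "bX = -(z+x)/(2*y)" "bY = (x+y)/(2*y)"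
  "cX = (z+x)/(2*z)" "cY = -(x+y)/(2*z)"
  shows "ipc x y z bX (bY - 1) 0 (-1) = x*(z+x)"
  using p unfolding ipc_def d
  apply (simp add: field_simps)
  unfolding Sd by algebra

lemma conc16:
  fixes x y z S iX iY aX aY bX bY cX cY :: real
  assumes p: "x>0" "y>0" "z>0" "S>0" and Sd: "S = x+y+z"
  and d: "iX = (z+x)/(2*S)" "iY = (x+y)/(2*S)"
  "aX = (z+x)/(2*x)" "aY = (x+y)/(2*x)"
  "bX = -(z+x)/(2*y)" "bY = (x+y)/(2*y)"
  "cX = (z+x)/(2*z)" "cY = -(x+y)/(2*z)"
  shows "ipc x y z cX cY 1 0 = y*(x+y)"
  using p unfolding ipc_def d
  apply (simp add: field_simps)
  unfolding Sd by algebra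

lemma conc17:
  fixes x y z S iX iY aX aY bX bY cX cY :: real
  assumes p: "x>0" "y>0" "z>0" "S>0" and Sd: "S = x+y+z"
  and d: "iX = (z+x)/(2*S)" "iY = (x+y)/(2*S)"
  "aX = (z+x)/(2*x)" "aY = (x+y)/(2*x)"
  "bX = -(z+x)/(2*y)" "bY = (x+y)/(2*y)"
  "cX = (z+x)/(2*z)" "cY = -(x+y)/(2*z)"
  shows "(bX - aX)*(cY - bY) - (cX - bX)*(bY - aY) = (x+y)*(y+z)*(z+x)/(2*x*y*z)"
  using p unfolding ipc_def d
  by (simp add: field_simps)

locale tri =
  fixes A u v :: point and x y z :: real
  assumes xp: "x > 0" and yp: "y > 0" and zp: "z > 0"
    and uu: "inner u u = (x+y)^2" and vv: "inner v v = (z+x)^2"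
    and uv: "inner u v = x^2+x*y+x*z-y*z"
    and det: "(u$1)*(v$2) - (u$2)*(v$1) \<noteq> 0"
begin

definition P :: "real \<Rightarrow> real \<Rightarrow> point" where "P s t = A + s *\<^sub>R u + t *\<^sub>R v"

lemma P_corners: "P 0 0 = A" "P 1 0 = A + u" "P 0 1 = A + v"
  unfolding P_def by simp_all

lemma Pdiff: "P s1 t1 - P s2 t2 = (s1-s2) *\<^sub>R u + (t1-t2) *\<^sub>R v"
  unfolding P_def by (simp add: algebra_simps)

lemma ipP: "inner (P s1 t1 - P s2 t2) (P s3 t3 - P s4 t4) = ipc x y z (s1-s2) (t1-t2) (s3-s4) (t3-t4)"
  unfolding Pdiff ipc_def
  by (simp add: inner_add_left inner_add_right uu vv uv inner_commute[of v u] algebra_simps)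

lemma distP: "dist (P s1 t1) (P s2 t2) = sqrt (ipc x y z (s1-s2) (t1-t2) (s1-s2) (t1-t2))"
  by (simp add: dist_norm norm_eq_sqrt_inner ipP)

lemma gram: "(x+y)^2*(z+x)^2 - (x^2+x*y+x*z-y*z)^2 = 4*x*y*z*(x+y+z)"
  by algebra

lemma gram_pos: "(x+y)^2*(z+x)^2 - (x^2+x*y+x*z-y*z)^2 > 0"
  unfolding gram using xp yp zp by simp

lemma P_eq: "P s1 t1 = P s2 t2 \<longleftrightarrow> s1 = s2 \<and> t1 = t2"
proof
  assume h: "P s1 t1 = P s2 t2"
  have e1: "ipc x y z (s1-s2) (t1-t2) (1-0) (0-0) = 0"
    using ipP[of s1 t1 s2 t2 1 0 0 0] h by simp
  have e2: "ipc x y z (s1-s2) (t1-t2) (0-0) (1-0) = 0"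
    using ipP[of s1 t1 s2 t2 0 1 0 0] h by simp
  define \<alpha> where "\<alpha> = s1 - s2"
  define \<beta> where "\<beta> = t1 - t2"
  define cc where "cc = (x+y)^2"
  define bb where "bb = (z+x)^2"
  define m where "m = x^2+x*y+x*z-y*z"
  have g: "cc*bb - m^2 \<noteq> 0" using gram_pos unfolding cc_def bb_def m_def by simp
  have f1: "\<alpha>*cc + \<beta>*m = 0" using e1 unfolding ipc_def \<alpha>_def \<beta>_def cc_def m_def by simp
  have f2: "\<alpha>*m + \<beta>*bb = 0" using e2 unfolding ipc_def \<alpha>_def \<beta>_def bb_def m_def by simp
  have "\<alpha>*(cc*bb - m^2) = bb*(\<alpha>*cc + \<beta>*m) - m*(\<alpha>*m + \<beta>*bb)" by algebra
  hence a0: "\<alpha> = 0" using f1 f2 g by simp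
  have "\<beta>*(cc*bb - m^2) = cc*(\<alpha>*m + \<beta>*bb) - m*(\<alpha>*cc + \<beta>*m)" by algebra
  hence b0: "\<beta> = 0" using f1 f2 g by simp
  show "s1 = s2 \<and> t1 = t2" using a0 b0 unfolding \<alpha>_def \<beta>_def by simp
qed simp

lemma ipc_pos: "(p, q) \<noteq> (0, 0) \<Longrightarrow> ipc x y z p q p q > 0"
proof -
  assume h: "(p, q) \<noteq> (0, 0)"
  have "P p q \<noteq> P 0 0" using h P_eq by simp
  hence "inner (P p q - P 0 0) (P p q - P 0 0) > 0" by simp
  thus ?thesis using ipP[of p q 0 0 p q 0 0] by simp
qed

lemma Pshift: "P q1 q2 + t *\<^sub>R (P r1 r2 - P q1 q2) = P (q1 + t*(r1-q1)) (q2 + t*(r2-q2))"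
  unfolding P_def by (simp add: algebra_simps)

lemma footP:
  "foot (P p1 p2) (P q1 q2) (P r1 r2) =
     (let t = ipc x y z (p1-q1) (p2-q2) (r1-q1) (r2-q2) / ipc x y z (r1-q1) (r2-q2) (r1-q1) (r2-q2)
      in P (q1 + t*(r1-q1)) (q2 + t*(r2-q2)))"
  unfolding foot_def Let_def ipP Pshift ..

lemma combP:
  assumes "w1 + w2 + w3 \<noteq> 0"
  shows "(1/(w1+w2+w3)) *\<^sub>R (w1 *\<^sub>R P e1 t1 + w2 *\<^sub>R P e2 t2 + w3 *\<^sub>R P e3 t3)
     = P ((w1*e1+w2*e2+w3*e3)/(w1+w2+w3)) ((w1*t1+w2*t2+w3*t3)/(w1+w2+w3))"
proof -
  have "w1 *\<^sub>R P e1 t1 + w2 *\<^sub>R P e2 t2 + w3 *\<^sub>R P e3 t3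
     = (w1+w2+w3) *\<^sub>R A + (w1*e1+w2*e2+w3*e3) *\<^sub>R u + (w1*t1+w2*t2+w3*t3) *\<^sub>R v"
    unfolding P_def by (simp add: algebra_simps)
  moreover have "(1/(w1+w2+w3)) *\<^sub>R ((w1+w2+w3) *\<^sub>R A) = A" using assms by simp
  ultimately show ?thesis unfolding P_def using assms by (simp add: scaleR_add_right)
qed

lemma perp0:
  assumes "inner w u = 0" "inner w v = 0" shows "w = 0"
proof -
  have a: "(w$1)*(u$1) + (w$2)*(u$2) = 0" "(w$1)*(v$1) + (w$2)*(v$2) = 0" using assms by (simp_all add: inner2)
  have "(w$1)*((u$1)*(v$2) - (u$2)*(v$1)) = (v$2)*((w$1)*(u$1) + (w$2)*(u$2)) - (u$2)*((w$1)*(v$1) + (w$2)*(v$2))" by algebra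
  hence "(w$1) = 0" using a det by simp
  moreover have "(w$2)*((u$1)*(v$2) - (u$2)*(v$1)) = (u$1)*((w$1)*(v$1) + (w$2)*(v$2)) - (v$1)*((w$1)*(u$1) + (w$2)*(u$2))" by algebra
  hence "(w$2) = 0" using a det by simp
  ultimately show ?thesis by (simp add: vec_eq_iff forall_2)
qed

lemma ipc_sq_diff: "ipc x y z p1 q1 p1 q1 - ipc x y z p2 q2 p2 q2 = ipc x y z (p1-p2) (q1-q2) (p1+p2) (q1+q2)"
  unfolding ipc_def by (simp add: algebra_simps power2_eq_square)

lemma ipc_lin_aux: "ipc x y z ((a1+b1+c1-i1)/2 - o1) ((a2+b2+c2-i2)/2 - o2) r1 r2 = ipc x y z (b1+c1-2 * o1) (b2+c2-2 * o2) r1 r2/2 + ipc x y z (a1-i1) (a2-i2) r1 r2/2"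
  unfolding ipc_def by (simp add: field_simps)

lemma ipc_scale: "ipc x y z (k*p) (k*q) r s = k * ipc x y z p q r s"
  unfolding ipc_def by (simp add: algebra_simps)

lemma sq_dist: "p > 0 \<Longrightarrow> ipc x y z s t s t = p^2 \<Longrightarrow> sqrt (ipc x y z s t s t) = p"
  by simp

lemma main_tri:
  "is_orthocenter
     (foot (bevan_point (P 0 0) (P 1 0) (P 0 1)) (P 0 0) (incenter (P 0 0) (P 1 0) (P 0 1)))
     (foot (bevan_point (P 0 0) (P 1 0) (P 0 1)) (P 1 0) (incenter (P 0 0) (P 1 0) (P 0 1)))
     (foot (bevan_point (P 0 0) (P 1 0) (P 0 1)) (P 0 1) (incenter (P 0 0) (P 1 0) (P 0 1)))
     (nagel_point (P 0 0) (P 1 0) (P 0 1))"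
proof -
  define S where "S = x+y+z"
  have Sp: "S > 0" using xp yp zp S_def by simp
  have nz: "y+z \<noteq> 0" "z+x \<noteq> 0" "x+y \<noteq> 0" "S \<noteq> 0" using xp yp zp Sp by simp_all
  define iX where "iX = (z+x)/(2*S)"
  define iY where "iY = (x+y)/(2*S)"
  define aX where "aX = (z+x)/(2*x)"
  define aY where "aY = (x+y)/(2*x)"
  define bX where "bX = -(z+x)/(2*y)"
  define bY where "bY = (x+y)/(2*y)"
  define cX where "cX = (z+x)/(2*z)"
  define cY where "cY = -(x+y)/(2*z)"
  note cs = xp yp zp Sp S_def iX_def iY_def aX_def aY_def bX_def bY_def cX_def cY_def
  note k0 = conc0[OF cs] and k1 = conc1[OF cs] and k2 = conc2[OF cs] and k3 = conc3[OF cs]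
    and k4 = conc4[OF cs] and k5 = conc5[OF cs] and k6 = conc6[OF cs] and k7 = conc7[OF cs]
    and k8 = conc8[OF cs] and k9 = conc9[OF cs] and k10 = conc10[OF cs] and k11 = conc11[OF cs]
    and k12 = conc12[OF cs] and k13 = conc13[OF cs] and k14 = conc14[OF cs] and k15 = conc15[OF cs]
    and k16 = conc16[OF cs] and k17 = conc17[OF cs]
  have dBC: "dist (P 1 0) (P 0 1) = y+z"
  proof -
    have "ipc x y z (1 - 0) (0 - 1) (1 - 0) (0 - 1) = (y+z)^2" unfolding ipc_def by algebra
    thus ?thesis unfolding distP using yp zp by simp
  qed
  have dCA: "dist (P 0 1) (P 0 0) = z+x"
  proof -
    have "ipc x y z (0 - 0) (1 - 0) (0 - 0) (1 - 0) = (z+x)^2" unfolding ipc_def by algebra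
    thus ?thesis unfolding distP using xp zp by simp
  qed
  have dAB: "dist (P 0 0) (P 1 0) = x+y"
  proof -
    have "ipc x y z (0 - 1) (0 - 0) (0 - 1) (0 - 0) = (x+y)^2" unfolding ipc_def by algebra
    thus ?thesis unfolding distP using xp yp by simp
  qed
  have I: "incenter (P 0 0) (P 1 0) (P 0 1) = P iX iY"
  proof -
    have "incenter (P 0 0) (P 1 0) (P 0 1) = P (((y+z)*0+(z+x)*1+(x+y)*0)/((y+z)+(z+x)+(x+y)))
        (((y+z)*0+(z+x)*0+(x+y)*1)/((y+z)+(z+x)+(x+y)))"
      unfolding incenter_def Let_def dBC dCA dAB using xp yp zp by (intro combP) simp
    also have "\<dots> = P iX iY" unfolding iX_def iY_def S_def by (rule arg_cong2[where f=P]) (simp_all add: field_simps)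
    finally show ?thesis .
  qed
  have JA: "excenter (P 0 0) (P 1 0) (P 0 1) = P aX aY"
  proof -
    have "excenter (P 0 0) (P 1 0) (P 0 1) = P ((-(y+z)*0+(z+x)*1+(x+y)*0)/(-(y+z)+(z+x)+(x+y)))
        ((-(y+z)*0+(z+x)*0+(x+y)*1)/(-(y+z)+(z+x)+(x+y)))"
      unfolding excenter_def Let_def dBC dCA dAB using xp yp zp by (intro combP) simp
    also have "\<dots> = P aX aY" unfolding aX_def aY_def using xp by (intro arg_cong2[where f=P]) (simp_all add: field_simps)
    finally show ?thesis .
  qed
  have JB: "excenter (P 1 0) (P 0 1) (P 0 0) = P bX bY"
  proof -
    have "excenter (P 1 0) (P 0 1) (P 0 0) = P ((-(z+x)*1+(x+y)*0+(y+z)*0)/(-(z+x)+(x+y)+(y+z)))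
        ((-(z+x)*0+(x+y)*1+(y+z)*0)/(-(z+x)+(x+y)+(y+z)))"
      unfolding excenter_def Let_def dBC dCA dAB using xp yp zp by (intro combP) simp
    also have "\<dots> = P bX bY" unfolding bX_def bY_def using yp by (intro arg_cong2[where f=P]) (simp_all add: field_simps)
    finally show ?thesis .
  qed
  have JC: "excenter (P 0 1) (P 0 0) (P 1 0) = P cX cY"
  proof -
    have "excenter (P 0 1) (P 0 0) (P 1 0) = P ((-(x+y)*0+(y+z)*0+(z+x)*1)/(-(x+y)+(y+z)+(z+x)))
        ((-(x+y)*1+(y+z)*0+(z+x)*0)/(-(x+y)+(y+z)+(z+x)))"
      unfolding excenter_def Let_def dBC dCA dAB using xp yp zp by (intro combP) simp
    also have "\<dots> = P cX cY" unfolding cX_def cY_def using zp by (intro arg_cong2[where f=P]) (simp_all add: field_simps)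
    finally show ?thesis .
  qed
  define eX where "eX = (aX+bX+cX-iX)/2"
  define eY where "eY = (aY+bY+cY-iY)/2"
  have eqAB: "dist (P eX eY) (P aX aY) = dist (P eX eY) (P bX bY)"
  proof -
    have h1: "(eX-aX)-(eX-bX) = bX-aX" "(eY-aY)-(eY-bY) = bY-aY" by simp_all
    have h2: "(eX-aX)+(eX-bX) = cX-iX" "(eY-aY)+(eY-bY) = cY-iY" unfolding eX_def eY_def by simp_all
    have "ipc x y z (eX-aX) (eY-aY) (eX-aX) (eY-aY) - ipc x y z (eX-bX) (eY-bY) (eX-bX) (eY-bY) = 0"
      unfolding ipc_sq_diff h1 h2 by (rule k0)
    hence "ipc x y z (eX-aX) (eY-aY) (eX-aX) (eY-aY) = ipc x y z (eX-bX) (eY-bY) (eX-bX) (eY-bY)" by simp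
    thus ?thesis unfolding distP by simp
  qed
  have eqBC: "dist (P eX eY) (P bX bY) = dist (P eX eY) (P cX cY)"
  proof -
    have h1: "(eX-bX)-(eX-cX) = cX-bX" "(eY-bY)-(eY-cY) = cY-bY" by simp_all
    have h2: "(eX-bX)+(eX-cX) = aX-iX" "(eY-bY)+(eY-cY) = aY-iY" unfolding eX_def eY_def by simp_all
    have "ipc x y z (eX-bX) (eY-bY) (eX-bX) (eY-bY) - ipc x y z (eX-cX) (eY-cY) (eX-cX) (eY-cY) = 0"
      unfolding ipc_sq_diff h1 h2 by (rule k1)
    hence "ipc x y z (eX-bX) (eY-bY) (eX-bX) (eY-bY) = ipc x y z (eX-cX) (eY-cY) (eX-cX) (eY-cY)" by simp
    thus ?thesis unfolding distP by simp
  qed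
  have Be: "bevan_point (P 0 0) (P 1 0) (P 0 1) = P eX eY"
    unfolding bevan_point_def JA JB JC circumcenter_def
  proof (rule the_equality)
    show "dist (P eX eY) (P aX aY) = dist (P eX eY) (P bX bY) \<and> dist (P eX eY) (P bX bY) = dist (P eX eY) (P cX cY)"
      using eqAB eqBC by simp
  next
    fix Y assume h: "dist Y (P aX aY) = dist Y (P bX bY) \<and> dist Y (P bX bY) = dist Y (P cX cY)"
    define w where "w = Y - P eX eY"
    have o1: "inner w (P bX bY - P aX aY) = 0" unfolding w_def
      by (rule perp_of_equid) (use h eqAB in auto)
    have o2: "inner w (P cX cY - P bX bY) = 0" unfolding w_def
      by (rule perp_of_equid) (use h eqBC in auto)
    have l1: "(bX-aX) * inner w u + (bY-aY) * inner w v = 0"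
      using o1 unfolding Pdiff by (simp add: inner_add_right)
    have l2: "(cX-bX) * inner w u + (cY-bY) * inner w v = 0"
      using o2 unfolding Pdiff by (simp add: inner_add_right)
    have dn: "(bX - aX)*(cY - bY) - (cX - bX)*(bY - aY) \<noteq> 0"
      unfolding k17 using xp yp zp by simp
    have "inner w u * ((bX - aX)*(cY - bY) - (cX - bX)*(bY - aY))
        = (cY-bY) * ((bX-aX) * inner w u + (bY-aY) * inner w v) - (bY-aY) * ((cX-bX) * inner w u + (cY-bY) * inner w v)"
      by algebra
    hence wu: "inner w u = 0" using l1 l2 dn by simp
    have "inner w v * ((bX - aX)*(cY - bY) - (cX - bX)*(bY - aY))
        = (bX-aX) * ((cX-bX) * inner w u + (cY-bY) * inner w v) - (cX-bX) * ((bX-aX) * inner w u + (bY-aY) * inner w v)"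
      by algebra
    hence wv: "inner w v = 0" using l1 l2 dn by simp
    have "w = 0" using perp0 wu wv by simp
    thus "Y = P eX eY" unfolding w_def by simp
  qed
  have iXp: "iX > 0" unfolding iX_def using xp zp Sp by simp
  have iX1: "iX - 1 \<noteq> 0" unfolding iX_def S_def using xp yp zp by (simp add: field_simps)
  have iY1: "iY - 1 \<noteq> 0" unfolding iY_def S_def using xp yp zp by (simp add: field_simps)
  have Ap: "foot (P eX eY) (P 0 0) (P iX iY) = P ((aX-iX)/2) ((aY-iY)/2)"
  proof -
    define kk where "kk = (y+z)/x"
    have pos: "ipc x y z iX iY iX iY > 0" using ipc_pos iXp by simp
    have ee: "eX = (aX+bX+cX-iX)/2" "eY = (aY+bY+cY-iY)/2" unfolding eX_def eY_def by (simp_all add: algebra_simps)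
    have L: "ipc x y z eX eY iX iY = ipc x y z (bX+cX-2*0) (bY+cY-2*0) iX iY/2 + ipc x y z (aX-iX) (aY-iY) iX iY/2"
      using ipc_lin_aux[of aX bX cX iX 0 aY bY cY iY 0 "iX" "iY"] unfolding ee by simp
    have Y: "ipc x y z (aX-iX) (aY-iY) iX iY = kk * ipc x y z iX iY iX iY"
      using ipc_scale[of kk "iX" "iY" "iX" "iY"] k5 k6 unfolding kk_def by simp
    have t: "ipc x y z eX eY iX iY / ipc x y z iX iY iX iY = kk/2" using L Y k2 pos by simp
    have t': "ipc x y z (eX - 0) (eY - 0) (iX - 0) (iY - 0) / ipc x y z (iX - 0) (iY - 0) (iX - 0) (iY - 0) = kk/2"
      using t by simp
    have "foot (P eX eY) (P 0 0) (P iX iY) = P (0 + kk/2*(iX-0)) (0 + kk/2*(iY-0))"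
      unfolding footP Let_def t' ..
    also have "\<dots> = P ((aX-iX)/2) ((aY-iY)/2)" using k5 k6 unfolding kk_def by (intro arg_cong2[where f=P]) (simp_all add: algebra_simps)
    finally show ?thesis .
  qed
  have Bp: "foot (P eX eY) (P 1 0) (P iX iY) = P (1 + (bX-iX)/2) ((bY-iY)/2)"
  proof -
    define kk where "kk = (z+x)/y"
    have pos: "ipc x y z (iX-1) iY (iX-1) iY > 0" using ipc_pos iX1 by simp
    have ee: "eX = (bX+cX+aX-iX)/2" "eY = (bY+cY+aY-iY)/2" unfolding eX_def eY_def by (simp_all add: algebra_simps)
    have L: "ipc x y z (eX-1) eY (iX-1) iY = ipc x y z (cX+aX-2*1) (cY+aY-2*0) (iX-1) iY/2 + ipc x y z (bX-iX) (bY-iY) (iX-1) iY/2"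
      using ipc_lin_aux[of bX cX aX iX 1 bY cY aY iY 0 "(iX-1)" "iY"] unfolding ee by simp
    have Y: "ipc x y z (bX-iX) (bY-iY) (iX-1) iY = kk * ipc x y z (iX-1) iY (iX-1) iY"
      using ipc_scale[of kk "(iX-1)" "iY" "(iX-1)" "iY"] k7 k8 unfolding kk_def by simp
    have t: "ipc x y z (eX-1) eY (iX-1) iY / ipc x y z (iX-1) iY (iX-1) iY = kk/2" using L Y k3 pos by simp
    have t': "ipc x y z (eX - 1) (eY - 0) (iX - 1) (iY - 0) / ipc x y z (iX - 1) (iY - 0) (iX - 1) (iY - 0) = kk/2"
      using t by simp
    have "foot (P eX eY) (P 1 0) (P iX iY) = P (1 + kk/2*(iX-1)) (0 + kk/2*(iY-0))"
      unfolding footP Let_def t' ..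
    also have "\<dots> = P (1 + (bX-iX)/2) ((bY-iY)/2)" using k7 k8 unfolding kk_def by (intro arg_cong2[where f=P]) (simp_all add: algebra_simps)
    finally show ?thesis .
  qed
  have Cp: "foot (P eX eY) (P 0 1) (P iX iY) = P ((cX-iX)/2) (1 + (cY-iY)/2)"
  proof -
    define kk where "kk = (x+y)/z"
    have pos: "ipc x y z iX (iY-1) iX (iY-1) > 0" using ipc_pos iY1 by simp
    have ee: "eX = (cX+aX+bX-iX)/2" "eY = (cY+aY+bY-iY)/2" unfolding eX_def eY_def by (simp_all add: algebra_simps)
    have L: "ipc x y z eX (eY-1) iX (iY-1) = ipc x y z (aX+bX-2*0) (aY+bY-2*1) iX (iY-1)/2 + ipc x y z (cX-iX) (cY-iY) iX (iY-1)/2"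
      using ipc_lin_aux[of cX aX bX iX 0 cY aY bY iY 1 "iX" "(iY-1)"] unfolding ee by simp
    have Y: "ipc x y z (cX-iX) (cY-iY) iX (iY-1) = kk * ipc x y z iX (iY-1) iX (iY-1)"
      using ipc_scale[of kk "iX" "(iY-1)" "iX" "(iY-1)"] k9 k10 unfolding kk_def by simp
    have t: "ipc x y z eX (eY-1) iX (iY-1) / ipc x y z iX (iY-1) iX (iY-1) = kk/2" using L Y k4 pos by simp
    have t': "ipc x y z (eX - 0) (eY - 1) (iX - 0) (iY - 1) / ipc x y z (iX - 0) (iY - 1) (iX - 0) (iY - 1) = kk/2"
      using t by simp
    have "foot (P eX eY) (P 0 1) (P iX iY) = P (0 + kk/2*(iX-0)) (1 + kk/2*(iY-1))"
      unfolding footP Let_def t' ..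
    also have "\<dots> = P ((cX-iX)/2) (1 + (cY-iY)/2)" using k9 k10 unfolding kk_def by (intro arg_cong2[where f=P]) (simp_all add: algebra_simps)
    finally show ?thesis .
  qed
  define tA where "tA = z/(y+z)"
  define tB where "tB = x/(z+x)"
  define tC where "tC = y/(x+y)"
  have TA: "foot (excenter (P 0 0) (P 1 0) (P 0 1)) (P 1 0) (P 0 1) = P (1 - tA) tA"
  proof -
    have "ipc x y z (aX-1) (aY-0) (0-1) (1-0) / ipc x y z (0-1) (1-0) (0-1) (1-0) = tA"
    proof -
      have dn: "ipc x y z (0-1) (1-0) (0-1) (1-0) = (y+z)^2" unfolding ipc_def by algebra
      have nm: "ipc x y z (aX-1) (aY-0) (0-1) (1-0) = z*(y+z)" using k14 by simp
      show ?thesis unfolding dn nm tA_def using yp zp by (simp add: power2_eq_square)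
    qed
    thus ?thesis unfolding JA footP Let_def by simp
  qed
  have TB: "foot (excenter (P 1 0) (P 0 1) (P 0 0)) (P 0 1) (P 0 0) = P 0 (1 - tB)"
  proof -
    have "ipc x y z (bX-0) (bY-1) (0-0) (0-1) / ipc x y z (0-0) (0-1) (0-0) (0-1) = tB"
    proof -
      have dn: "ipc x y z (0-0) (0-1) (0-0) (0-1) = (z+x)^2" unfolding ipc_def by algebra
      have nm: "ipc x y z (bX-0) (bY-1) (0-0) (0-1) = x*(z+x)" using k15 by simp
      show ?thesis unfolding dn nm tB_def using xp zp by (simp add: power2_eq_square)
    qed
    thus ?thesis unfolding JB footP Let_def by simp
  qed
  have TC: "foot (excenter (P 0 1) (P 0 0) (P 1 0)) (P 0 0) (P 1 0) = P tC 0"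
  proof -
    have "ipc x y z (cX-0) (cY-0) (1-0) (0-0) / ipc x y z (1-0) (0-0) (1-0) (0-0) = tC"
    proof -
      have dn: "ipc x y z (1-0) (0-0) (1-0) (0-0) = (x+y)^2" unfolding ipc_def by algebra
      have nm: "ipc x y z (cX-0) (cY-0) (1-0) (0-0) = y*(x+y)" using k16 by simp
      show ?thesis unfolding dn nm tC_def using xp yp by (simp add: power2_eq_square)
    qed
    thus ?thesis unfolding JC footP Let_def by simp
  qed
  have c1: "P (y/S) (z/S) = P 0 0 + ((y+z)/S) *\<^sub>R (P (1-tA) tA - P 0 0)"
  proof -
    have h1: "y / S = 0 + (y + z) / S * ((1 - z / (y + z)) - 0)" using nz by (simp add: diff_divide_eq_iff)
    have h2: "z / S = 0 + (y + z) / S * (z / (y + z) - 0)" using nz by simp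
    show ?thesis unfolding Pshift tA_def by (subst h1, subst h2, rule refl)
  qed
  have c2: "P (y/S) (z/S) = P 1 0 + ((z+x)/S) *\<^sub>R (P 0 (1-tB) - P 1 0)"
  proof -
    have h1: "y / S = 1 + (z + x) / S * (0 - 1)" using nz S_def by (simp add: divide_simps)
    have h2: "z / S = 0 + (z + x) / S * ((1 - x / (z + x)) - 0)" using nz by (simp add: diff_divide_eq_iff)
    show ?thesis unfolding Pshift tB_def by (subst h1, subst h2, rule refl)
  qed
  have c3: "P (y/S) (z/S) = P 0 1 + ((x+y)/S) *\<^sub>R (P tC 0 - P 0 1)"
  proof -
    have h1: "y / S = 0 + (x + y) / S * (y / (x + y) - 0)" using nz by simp
    have h2: "z / S = 1 + (x + y) / S * (0 - 1)" using nz S_def by (simp add: divide_simps)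
    show ?thesis unfolding Pshift tC_def by (subst h1, subst h2, rule refl)
  qed
  have N: "nagel_point (P 0 0) (P 1 0) (P 0 1) = P (y/S) (z/S)"
    unfolding nagel_point_def TA TB TC
  proof (rule the_equality)
    show "collinear {P 0 0, P (1 - tA) tA, P (y/S) (z/S)} \<and> collinear {P 1 0, P 0 (1 - tB), P (y/S) (z/S)}
        \<and> collinear {P 0 1, P tC 0, P (y/S) (z/S)}"
      by (intro conjI; (subst c1, rule collinear_shift)?; (subst c2, rule collinear_shift)?; (subst c3, rule collinear_shift)?)
  next
    fix M assume h: "collinear {P 0 0, P (1 - tA) tA, M} \<and> collinear {P 1 0, P 0 (1 - tB), M}
        \<and> collinear {P 0 1, P tC 0, M}"
    have ne1: "P 0 0 \<noteq> P (1 - tA) tA" unfolding P_eq tA_def using yp zp by simp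
    have ne2: "P 1 0 \<noteq> P 0 (1 - tB)" unfolding P_eq by simp
    obtain k where hk: "M = P 0 0 + k *\<^sub>R (P (1 - tA) tA - P 0 0)"
      using collinear_param[OF _ ne1] h by blast
    obtain l where hl: "M = P 1 0 + l *\<^sub>R (P 0 (1 - tB) - P 1 0)"
      using collinear_param[OF _ ne2] h by blast
    have "P (0 + k*((1-tA)-0)) (0 + k*(tA-0)) = P (1 + l*(0-1)) (0 + l*((1-tB)-0))"
      using hk hl unfolding Pshift by simp
    hence e1: "k*(1-tA) = 1 - l" and e2: "k*tA = l*(1-tB)" unfolding P_eq by simp_all
    have q1: "1 - tA = y/(y+z)" unfolding tA_def using nz(1) by (simp add: field_simps)
    have q2: "1 - tB = z/(z+x)" unfolding tB_def using nz(2) by (simp add: field_simps)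
    have "k*y/(y+z) = 1 - l" using e1 q1 by simp
    hence e1': "k*y = (1 - l)*(y+z)" using nz(1) by (simp add: divide_eq_eq)
    have "(k*z)/(y+z) = (l*z)/(z+x)" using e2 q2 unfolding tA_def by simp
    hence "(k*z)*(z+x) = (l*z)*(y+z)" using nz(1,2) by (simp add: frac_eq_eq)
    hence "z*(k*(z+x)) = z*(l*(y+z))" by (simp add: algebra_simps)
    hence e2': "k*(z+x) = l*(y+z)" using zp by simp
    have "k * S = y+z" unfolding S_def using e1' e2' by algebra
    hence kv: "k = (y+z)/S" using Sp by (simp add: field_simps)
    show "M = P (y/S) (z/S)" using hk kv c1 by simp
  qed
  show ?thesis
    unfolding Be I Ap Bp Cp N is_orthocenter_def ipP using k11 k12 k13 by simp
qed

end

theorem proposition4p1: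
  fixes A B C :: point
  assumes "\<not> collinear {A, B, C}"
  defines "I \<equiv> incenter A B C"
      and "Be \<equiv> bevan_point A B C"
  defines "A' \<equiv> foot Be A I"
      and "B' \<equiv> foot Be B I"
      and "C' \<equiv> foot Be C I"
  shows "is_orthocenter A' B' C' (nagel_point A B C)"
proof -
  define u where "u = B - A"
  define v where "v = C - A"
  define a where "a = dist B C"
  define b where "b = dist C A"
  define c where "c = dist A B"
  have cc: "inner u u = c^2" unfolding c_def u_def dist_commute[of A B]
    by (simp add: dist_norm power2_norm_eq_inner)
  have bb: "inner v v = b^2" unfolding b_def v_def
    by (simp add: dist_norm power2_norm_eq_inner)
  have "v - u = C - B" unfolding u_def v_def by simp
  hence aa: "inner (v - u) (v - u) = a^2" unfolding a_def dist_commute[of B C]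
    by (simp add: dist_norm power2_norm_eq_inner)
  have uv: "inner u v = (b^2 + c^2 - a^2)/2"
    using aa bb cc by (simp add: inner_diff_left inner_diff_right inner_commute algebra_simps)
  have det: "(u$1)*(v$2) - (u$2)*(v$1) \<noteq> 0"
  proof
    assume d0: "(u$1)*(v$2) - (u$2)*(v$1) = 0"
    have "collinear {A, B, C}"
    proof (cases "u = 0")
      case True
      hence "B = A" unfolding u_def by simp
      thus ?thesis by (simp add: collinear_2)
    next
      case False
      hence pos: "inner u u > 0" by simp
      define k where "k = inner u v / inner u u"
      have "v = k *\<^sub>R u"
      proof -
        have "(v$1) * inner u u = inner u v * (u$1)"
          unfolding inner2 using d0 by algebra
        moreover have "(v$2) * inner u u = inner u v * (u$2)"
          unfolding inner2 using d0 by algebra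
        ultimately show ?thesis unfolding k_def using pos
          by (simp add: vec_eq_iff forall_2 field_simps)
      qed
      hence "C = A + k *\<^sub>R (B - A)" unfolding u_def v_def by (simp add: algebra_simps)
      thus ?thesis using collinear_shift by simp
    qed
    thus False using assms(1) by simp
  qed
  have gram: "inner u u * inner v v - (inner u v)^2 = ((u$1)*(v$2) - (u$2)*(v$1))^2"
    unfolding inner2 by algebra
  have t1: "a \<le> b + c" unfolding a_def b_def c_def using dist_triangle[of B C A] by (simp add: dist_commute)
  have t2: "b \<le> c + a" unfolding a_def b_def c_def using dist_triangle[of C A B] by (simp add: dist_commute)
  have t3: "c \<le> a + b" unfolding a_def b_def c_def using dist_triangle[of A B C] by (simp add: dist_commute)
  define x where "x = (b+c-a)/2"
  define y where "y = (c+a-b)/2"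
  define z where "z = (a+b-c)/2"
  have ea: "a = y+z" unfolding y_def z_def by (simp add: field_simps)
  have eb: "b = z+x" unfolding x_def z_def by (simp add: field_simps)
  have ec: "c = x+y" unfolding x_def y_def by (simp add: field_simps)
  have x0: "x \<ge> 0" "y \<ge> 0" "z \<ge> 0" unfolding x_def y_def z_def using t1 t2 t3 by simp_all
  have "b^2*c^2 - ((b^2 + c^2 - a^2)/2)^2 = 4*x*y*z*(x+y+z)"
    unfolding ea eb ec by algebra
  moreover have "inner u u * inner v v - (inner u v)^2 = b^2*c^2 - ((b^2 + c^2 - a^2)/2)^2"
    unfolding cc bb uv by simp
  moreover have "((u$1)*(v$2) - (u$2)*(v$1))^2 > 0" using det by simp
  ultimately have "4*x*y*z*(x+y+z) > 0" using gram by simp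
  hence nz: "x \<noteq> 0" "y \<noteq> 0" "z \<noteq> 0" by auto
  have xp: "x > 0" "y > 0" "z > 0" using x0 nz by simp_all
  have uu': "inner u u = (x+y)^2" using cc ec by simp
  have vv': "inner v v = (z+x)^2" using bb eb by simp
  have uv': "inner u v = x^2+x*y+x*z-y*z" unfolding uv ea eb ec by algebra
  interpret T: tri A u v x y z
    by unfold_locales (use xp uu' vv' uv' det in auto)
  have PA: "A = T.P 0 0" using T.P_corners(1) by simp
  have "A + u = B" unfolding u_def by simp
  hence PB: "B = T.P 1 0" using T.P_corners(2) by simp
  have "A + v = C" unfolding v_def by simp
  hence PC: "C = T.P 0 1" using T.P_corners(3) by simp
  show ?thesis unfolding A'_def B'_def C'_def Be_def I_def
    using T.main_tri unfolding PA[symmetric] PB[symmetric] PC[symmetric] .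
qed

end
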